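(* Let $J$ be a stable monomial ideal of $R=k[x_1,\dots,x_n]$ and let $d\ge1$. Let $T_1,\ldots,T_r$ be the monomials which form a $k$-basis of $\left((J:x_n)/J\right)_{d-1}$ (i.e. the monomials of degree $d-1$ in $(J:x_n)\setminus J$). Then $$\{x_nT_1,\ldots,x_nT_r\}=\{T\in \mathcal G(J)_d \mid x_n \text{ divides } T\}.$$ In particular $\dim_k \left((J:x_n)/J\right)_{d-1}= |\{T\in \mathcal G(J)_d \mid x_n\text{ divides } T\}|$.
   Context: For a monomial $u=x_1^{a_1}\cdots x_n^{a_n}$, $m(u)=\max\{j: a_j>0\}$. A monomial ideal $J$ is stable if for every monomial $w\in J$ and every $j<m(w)$, the monomial $x_jw/x_{m(w)}$ lies in $J$. $\mathcal G(J)$ is the set of minimal monomial generators of $J$ and $\mathcal G(J)_d$ those of degree $d$. *)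

theory Defs
  imports Main
begin

text \<open>Monomials of k[x_1,...,x_n] are represented by exponent vectors
  a :: nat \<Rightarrow> nat supported in {1..n}; a monomial ideal is represented by
  the set of monomials it contains (which determines it).\<close>

definition monomials :: "nat \<Rightarrow> (nat \<Rightarrow> nat) set" where
  "monomials n = {a. \<forall>j. 0 < a j \<longrightarrow> j \<in> {1..n}}"

definition mdvd :: "(nat \<Rightarrow> nat) \<Rightarrow> (nat \<Rightarrow> nat) \<Rightarrow> bool" where
  "mdvd a b \<longleftrightarrow> (\<forall>j. a j \<le> b j)"

definition mmult :: "(nat \<Rightarrow> nat) \<Rightarrow> (nat \<Rightarrow> nat) \<Rightarrow> (nat \<Rightarrow> nat)" where
  "mmult a b = (\<lambda>j. a j + b j)"

definition var :: "nat \<Rightarrow> (nat \<Rightarrow> nat)" where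
  "var i = (\<lambda>j. if j = i then 1 else 0)"

definition mdeg :: "nat \<Rightarrow> (nat \<Rightarrow> nat) \<Rightarrow> nat" where
  "mdeg n a = (\<Sum>j\<in>{1..n}. a j)"

definition mmax :: "(nat \<Rightarrow> nat) \<Rightarrow> nat" where
  "mmax u = Max {j. 0 < u j}"

definition monomial_ideal :: "nat \<Rightarrow> (nat \<Rightarrow> nat) set \<Rightarrow> bool" where
  "monomial_ideal n J \<longleftrightarrow> J \<subseteq> monomials n \<and>
     (\<forall>u\<in>J. \<forall>v\<in>monomials n. mdvd u v \<longrightarrow> v \<in> J)"

text \<open>Stable: for every monomial w in J and every j < m(w), x_j w / x_{m(w)} \<in> J
  (vacuous for w = 1, which has no variables).\<close>
definition stable :: "nat \<Rightarrow> (nat \<Rightarrow> nat) set \<Rightarrow> bool" where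
  "stable n J \<longleftrightarrow> (\<forall>w\<in>J. {j. 0 < w j} \<noteq> {} \<longrightarrow>
     (\<forall>j. 1 \<le> j \<and> j < mmax w \<longrightarrow>
        (w(j := w j + 1, mmax w := w (mmax w) - 1)) \<in> J))"

definition mingens :: "(nat \<Rightarrow> nat) set \<Rightarrow> (nat \<Rightarrow> nat) set" where
  "mingens J = {u\<in>J. \<forall>v\<in>J. mdvd v u \<longrightarrow> v = u}"

definition colon :: "nat \<Rightarrow> (nat \<Rightarrow> nat) set \<Rightarrow> nat \<Rightarrow> (nat \<Rightarrow> nat) set" where
  "colon n J i = {u\<in>monomials n. mmult (var i) u \<in> J}"

end

theory Submission
  imports Defs
begin

lemma mdeg_mult_var:
  assumes "1 \<le> n"
  shows "mdeg n (mmult (var n) T) = mdeg n T + 1"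
proof -
  have "mdeg n (mmult (var n) T) = (\<Sum>j\<in>{1..n}. var n j) + mdeg n T"
    by (simp add: mdeg_def mmult_def sum.distrib)
  moreover have "(\<Sum>j\<in>{1..n}. var n j) = 1"
    using assms by (simp add: var_def)
  ultimately show ?thesis by simp
qed

lemma mmult_var_apply: "mmult (var n) T j = (if j = n then T j + 1 else T j)"
  by (simp add: mmult_def var_def)

theorem lemma3p8:
  fixes n d :: nat and J :: "(nat \<Rightarrow> nat) set"
  assumes "1 \<le> n" and "monomial_ideal n J" and "stable n J" and "1 \<le> d"
  shows "(mmult (var n) ` {T\<in>colon n J n. T \<notin> J \<and> mdeg n T = d - 1}
           = {T\<in>mingens J. mdeg n T = d \<and> 0 < T n}) \<and>
         card {T\<in>colon n J n. T \<notin> J \<and> mdeg n T = d - 1}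
           = card {T\<in>mingens J. mdeg n T = d \<and> 0 < T n}"
proof -
  have Jm: "J \<subseteq> monomials n" and up: "\<And>u v. u \<in> J \<Longrightarrow> v \<in> monomials n \<Longrightarrow> mdvd u v \<Longrightarrow> v \<in> J"
    using assms(2) unfolding monomial_ideal_def by auto
  have inj: "inj (mmult (var n))"
  proof (rule injI)
    fix a b assume ab: "mmult (var n) a = mmult (var n) b"
    show "a = b"
    proof
      fix j show "a j = b j" using fun_cong[OF ab, of j] by (simp add: mmult_def)
    qed
  qed
  have eq: "mmult (var n) ` {T\<in>colon n J n. T \<notin> J \<and> mdeg n T = d - 1}
           = {T\<in>mingens J. mdeg n T = d \<and> 0 < T n}"
  proof
    show "mmult (var n) ` {T\<in>colon n J n. T \<notin> J \<and> mdeg n T = d - 1}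
           \<subseteq> {T\<in>mingens J. mdeg n T = d \<and> 0 < T n}"
    proof
      fix U assume "U \<in> mmult (var n) ` {T\<in>colon n J n. T \<notin> J \<and> mdeg n T = d - 1}"
      then obtain T where U: "U = mmult (var n) T" and Tc: "T \<in> monomials n"
        and UJ: "U \<in> J" and TJ: "T \<notin> J" and Td: "mdeg n T = d - 1"
        unfolding colon_def by auto
      have Ua: "\<And>j. U j = (if j = n then T j + 1 else T j)" using U mmult_var_apply by simp
      have Um: "U \<in> monomials n" using UJ Jm by auto
      have "U \<in> mingens J"
        unfolding mingens_def
      proof (intro CollectI conjI ballI impI)
        show "U \<in> J" by fact
        fix V assume VJ: "V \<in> J" and VU: "mdvd V U"
        show "V = U"
        proof (rule ccontr)
          assume ne: "V \<noteq> U"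
          have Vle: "\<And>j. V j \<le> U j" using VU mdvd_def by auto
          show False
          proof (cases "V n \<le> T n")
            case True
            have "mdvd V T" unfolding mdvd_def
            proof
              fix i show "V i \<le> T i"
                using Vle[of i] Ua[of i] True by (cases "i = n") auto
            qed
            then show False using up VJ Tc TJ by blast
          next
            case False
            then have Vn: "V n = T n + 1" using Vle[of n] Ua[of n] by simp
            obtain j where j: "V j \<noteq> U j" using ne by auto
            then have jn: "j \<noteq> n" using Vn Ua by auto
            have Vj: "V j < T j" using j Vle[of j] Ua[of j] jn by simp
            have "0 < U j" using Vj Ua[of j] jn by simp
            then have j1n: "j \<in> {1..n}" using Um unfolding monomials_def by blast
            have Vm: "V \<in> monomials n" using VJ Jm by auto
            have fin: "finite {i. 0 < V i}"
            proof (rule finite_subset)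
              show "{i. 0 < V i} \<subseteq> {1..n}" using Vm unfolding monomials_def by blast
            qed simp
            have nin: "n \<in> {i. 0 < V i}" using Vn by simp
            have mm: "mmax V = n"
              unfolding mmax_def
            proof (rule Max_eqI[OF fin _ nin])
              fix y assume "y \<in> {i. 0 < V i}"
              then show "y \<le> n" using Vm unfolding monomials_def by auto
            qed
            have st: "\<forall>j. 1 \<le> j \<and> j < mmax V \<longrightarrow> V(j := V j + 1, mmax V := V (mmax V) - 1) \<in> J"
              using assms(3) VJ nin unfolding stable_def by blast
            have "1 \<le> j \<and> j < mmax V" using j1n jn mm by auto
            then have "V(j := V j + 1, mmax V := V (mmax V) - 1) \<in> J" using st by blast
            then have V'J: "V(j := V j + 1, n := V n - 1) \<in> J" using mm by simp
            have "mdvd (V(j := V j + 1, n := V n - 1)) T"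
              unfolding mdvd_def
            proof
              fix i show "(V(j := V j + 1, n := V n - 1)) i \<le> T i"
                using Vn Vj jn Vle[of i] Ua[of i] by auto
            qed
            then show False using up V'J Tc TJ by blast
          qed
        qed
      qed
      moreover have "mdeg n U = d" using U mdeg_mult_var[OF assms(1)] Td assms(4) by simp
      moreover have "0 < U n" using Ua by simp
      ultimately show "U \<in> {T\<in>mingens J. mdeg n T = d \<and> 0 < T n}" by simp
    qed
  next
    show "{T\<in>mingens J. mdeg n T = d \<and> 0 < T n}
        \<subseteq> mmult (var n) ` {T\<in>colon n J n. T \<notin> J \<and> mdeg n T = d - 1}"
    proof
      fix U assume "U \<in> {T\<in>mingens J. mdeg n T = d \<and> 0 < T n}"
      then have UJ: "U \<in> J" and mn: "\<And>V. V \<in> J \<Longrightarrow> mdvd V U \<Longrightarrow> V = U"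
        and Ud: "mdeg n U = d" and Un: "0 < U n"
        unfolding mingens_def by auto
      define T where "T = U(n := U n - 1)"
      have UT: "U = mmult (var n) T"
        using Un by (auto simp: T_def mmult_var_apply)
      have Um: "U \<in> monomials n" using UJ Jm by auto
      have Tm: "T \<in> monomials n" using Um assms(1) unfolding T_def monomials_def by auto
      have "T \<notin> J"
      proof
        assume "T \<in> J"
        moreover have "mdvd T U" unfolding mdvd_def T_def by auto
        ultimately have "T = U" using mn by blast
        then have "T n = U n" by simp
        moreover have "T n = U n - 1" unfolding T_def by simp
        ultimately show False using Un by simp
      qed
      moreover have "T \<in> colon n J n" using Tm UJ UT unfolding colon_def by simp
      moreover have "mdeg n T = d - 1" using Ud UT mdeg_mult_var[OF assms(1)] by simp
      ultimately show "U \<in> mmult (var n) ` {T\<in>colon n J n. T \<notin> J \<and> mdeg n T = d - 1}"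
        using UT by blast
    qed
  qed
  have "card (mmult (var n) ` {T\<in>colon n J n. T \<notin> J \<and> mdeg n T = d - 1})
      = card {T\<in>colon n J n. T \<notin> J \<and> mdeg n T = d - 1}"
    by (rule card_image, rule inj_on_subset[OF inj], rule subset_UNIV)
  then show ?thesis using eq by argo
qed

end
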